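(* Consider problem (VP) under the standing assumptions at $\bar x\in Q_0$. Let $\bar x$ be a local Geoffrion properly efficient solution of (VP) and suppose $L(Q;\bar x)\subset T(Q_0;\bar x)$, where $L(Q;\bar x):=\{v\in X: f_i^{\circ}(\bar x,v)\leqq0\ \forall i\in I,\ g_j^{\circ}(\bar x,v)\leqq0\ \forall j\in J(\bar x)\}$. Then there is no $u\in X$ such that $f_i^{\circ}(\bar x,u)\leqq0$ for all $i\in I$, $f_i^{\circ}(\bar x,u)<0$ for at least one $i\in I$, and $g_j^{\circ}(\bar x,u)\leqq 0$ for all $j\in J(\bar x)$.
   Context: Standing setting: $X$ is a Banach space; $I=\{1,\dots,p\}$, $J=\{1,\dots,m\}$; $f_i,g_j\colon X\to\mathbb{R}$; (VP) minimizes $f=(f_1,\dots,f_p)$ over $Q_0:=\{x\in X: g_j(x)\leqq 0,\ j\in J\}$. $J(\bar x):=\{j\in J: g_j(\bar x)=0\}$. Standing assumptions: $f_i$ ($i\in I$), $g_j$ ($j\in J(\bar x)$) locally Lipschitz at $\bar x$; $g_j$ ($j\notin J(\bar x)$) continuous at $\bar x$. $Q:=Q_0\cap\{x: f_i(x)\leqq f_i(\bar x),\ i\in I\}$. Clarke derivative: $F^{\circ}(\bar x,u):=\limsup_{x\to\bar x,\,t\downarrow0}\frac{F(x+tu)-F(x)}{t}$. Tangent cone: $T(\Omega;\bar x):=\{d:\exists t_k\downarrow0,\ \exists d^k\to d,\ \bar x+t_kd^k\in\Omega\ \forall k\}$. Local Geoffrion properly efficient solution: there is a neighborhood $U$ of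 $\bar x$ such that (a) no $x\in U\cap Q_0$ has $f(x)\leqq f(\bar x)$ componentwise with $f(x)\ne f(\bar x)$, and (b) there is $M>0$ such that for every $i\in I$ and every $x\in U\cap Q_0$ with $f_i(x)<f_i(\bar x)$ there exists $j\in I$ with $f_j(x)>f_j(\bar x)$ and $\frac{f_i(\bar x)-f_i(x)}{f_j(x)-f_j(\bar x)}\leqq M$. *)

theory Defs
  imports "HOL-Analysis.Analysis"
begin

definition clarke_dd :: "('a::real_normed_vector \<Rightarrow> real) \<Rightarrow> 'a \<Rightarrow> 'a \<Rightarrow> ereal" where
  "clarke_dd F xbar u =
     Limsup (at (xbar, 0) within (UNIV \<times> {0<..}))
       (\<lambda>(x, t). ereal ((F (x + t *\<^sub>R u) - F x) / t))"

definition locally_lipschitz_at :: "('a::metric_space \<Rightarrow> real) \<Rightarrow> 'a \<Rightarrow> bool" where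
  "locally_lipschitz_at F xbar \<longleftrightarrow>
     (\<exists>K \<delta>. \<delta> > 0 \<and> (\<forall>x\<in>ball xbar \<delta>. \<forall>y\<in>ball xbar \<delta>. \<bar>F x - F y\<bar> \<le> K * dist x y))"

definition tangent_cone :: "'a::real_normed_vector set \<Rightarrow> 'a \<Rightarrow> 'a set" where
  "tangent_cone \<Omega> xbar = {d. \<exists>t :: nat \<Rightarrow> real. \<exists>dk :: nat \<Rightarrow> 'a.
      (\<forall>k. t k > 0) \<and> t \<longlonglongrightarrow> 0 \<and> dk \<longlonglongrightarrow> d \<and> (\<forall>k. xbar + t k *\<^sub>R dk k \<in> \<Omega>)}"

definition feas :: "nat \<Rightarrow> (nat \<Rightarrow> 'a \<Rightarrow> real) \<Rightarrow> 'a set" where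
  "feas m g = {x. \<forall>j\<in>{1..m}. g j x \<le> 0}"

definition active :: "nat \<Rightarrow> (nat \<Rightarrow> 'a \<Rightarrow> real) \<Rightarrow> 'a \<Rightarrow> nat set" where
  "active m g xbar = {j\<in>{1..m}. g j xbar = 0}"

definition Qset :: "nat \<Rightarrow> (nat \<Rightarrow> 'a \<Rightarrow> real) \<Rightarrow> nat \<Rightarrow> (nat \<Rightarrow> 'a \<Rightarrow> real) \<Rightarrow> 'a \<Rightarrow> 'a set" where
  "Qset p f m g xbar = feas m g \<inter> {x. \<forall>i\<in>{1..p}. f i x \<le> f i xbar}"

definition linearizing_cone ::
  "nat \<Rightarrow> (nat \<Rightarrow> 'a::real_normed_vector \<Rightarrow> real) \<Rightarrow> nat \<Rightarrow> (nat \<Rightarrow> 'a \<Rightarrow> real) \<Rightarrow> 'a \<Rightarrow> 'a set" where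
  "linearizing_cone p f m g xbar = {v. (\<forall>i\<in>{1..p}. clarke_dd (f i) xbar v \<le> 0) \<and>
      (\<forall>j\<in>active m g xbar. clarke_dd (g j) xbar v \<le> 0)}"

definition local_geoffrion_proper ::
  "nat \<Rightarrow> (nat \<Rightarrow> 'a::topological_space \<Rightarrow> real) \<Rightarrow> nat \<Rightarrow> (nat \<Rightarrow> 'a \<Rightarrow> real) \<Rightarrow> 'a \<Rightarrow> bool" where
  "local_geoffrion_proper p f m g xbar \<longleftrightarrow>
     (\<exists>U. open U \<and> xbar \<in> U \<and>
        \<not> (\<exists>x\<in>U \<inter> feas m g. (\<forall>i\<in>{1..p}. f i x \<le> f i xbar) \<and> (\<exists>i\<in>{1..p}. f i x \<noteq> f i xbar)) \<and>
        (\<exists>M>0. \<forall>i\<in>{1..p}. \<forall>x\<in>U \<inter> feas m g. f i x < f i xbar \<longrightarrow>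
            (\<exists>j\<in>{1..p}. f j x > f j xbar \<and> (f i xbar - f i x) / (f j x - f j xbar) \<le> M)))"

end

theory Submission
  imports Defs
begin

lemma clarke_seq:
  fixes F :: "'a::real_normed_vector \<Rightarrow> real"
  assumes "clarke_dd F xbar u < ereal a" and "\<forall>k. t k > 0" and "t \<longlonglongrightarrow> 0"
  shows "\<forall>\<^sub>F k in sequentially. F (xbar + t k *\<^sub>R u) - F xbar < a * t k"
proof -
  let ?S = "UNIV \<times> {0<..} :: ('a \<times> real) set"
  have ev: "\<forall>\<^sub>F y in at (xbar, 0) within ?S. (\<lambda>(x, t). ereal ((F (x + t *\<^sub>R u) - F x) / t)) y < ereal a"
    using Limsup_lessD assms(1) unfolding clarke_dd_def by blast
  have lim: "filterlim (\<lambda>k. (xbar, t k)) (at (xbar, 0) within ?S) sequentially"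
  proof (subst filterlim_at, intro conjI)
    show "\<forall>\<^sub>F k in sequentially. (xbar, t k) \<in> ?S \<and> (xbar, t k) \<noteq> (xbar, 0)"
      using assms(2) by (auto intro!: always_eventually) (metis less_irrefl)
    show "((\<lambda>k. (xbar, t k)) \<longlongrightarrow> (xbar, 0)) sequentially"
      using assms(3) by (intro tendsto_Pair) auto
  qed
  have "\<forall>\<^sub>F k in sequentially. ereal ((F (xbar + t k *\<^sub>R u) - F xbar) / t k) < ereal a"
    using eventually_compose_filterlim[OF ev lim] by simp
  then show ?thesis
  proof (rule eventually_mono)
    fix k assume "ereal ((F (xbar + t k *\<^sub>R u) - F xbar) / t k) < ereal a"
    then show "F (xbar + t k *\<^sub>R u) - F xbar < a * t k"
      using assms(2)[rule_format, of k] by (simp add: pos_divide_less_eq)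
  qed
qed

lemma clarke_seq2:
  fixes F :: "'a::real_normed_vector \<Rightarrow> real"
  assumes "clarke_dd F xbar u < ereal a" and "\<forall>k. t k > 0" and "t \<longlonglongrightarrow> 0"
    and "d \<longlonglongrightarrow> u" and "locally_lipschitz_at F xbar"
  shows "\<forall>\<^sub>F k in sequentially. F (xbar + t k *\<^sub>R d k) - F xbar < a * t k"
proof -
  obtain a' where a': "clarke_dd F xbar u < ereal a'" "ereal a' < ereal a"
    using ereal_dense2[OF assms(1)] by blast
  have aa: "a' < a" using a' by simp
  obtain K \<delta> where Kd: "\<delta> > 0" "\<forall>x\<in>ball xbar \<delta>. \<forall>y\<in>ball xbar \<delta>. \<bar>F x - F y\<bar> \<le> K * dist x y"
    using assms(5) unfolding locally_lipschitz_at_def by blast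
  define K' where "K' = max K 0"
  have K': "\<forall>x\<in>ball xbar \<delta>. \<forall>y\<in>ball xbar \<delta>. \<bar>F x - F y\<bar> \<le> K' * dist x y" "K' \<ge> 0"
  proof -
    have m: "\<And>x y. K * dist x y \<le> max K 0 * dist x y" by (simp add: mult_right_mono)
    show "\<forall>x\<in>ball xbar \<delta>. \<forall>y\<in>ball xbar \<delta>. \<bar>F x - F y\<bar> \<le> K' * dist x y"
      unfolding K'_def
    proof (intro ballI)
      fix x y assume "x \<in> ball xbar \<delta>" "y \<in> ball xbar \<delta>"
      then have "\<bar>F x - F y\<bar> \<le> K * dist x y" using Kd(2) by blast
      then show "\<bar>F x - F y\<bar> \<le> max K 0 * dist x y" using m[of x y] by linarith
    qed
    show "K' \<ge> 0" unfolding K'_def by simp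
  qed
  define \<eta> where "\<eta> = (a - a') / (K' + 1)"
  have eta: "\<eta> > 0" "K' * \<eta> \<le> a - a'"
    using aa K'(2) unfolding \<eta>_def by (auto simp: field_simps)
  have e1: "\<forall>\<^sub>F k in sequentially. F (xbar + t k *\<^sub>R u) - F xbar < a' * t k"
    using clarke_seq[OF a'(1) assms(2,3)] .
  have e2: "\<forall>\<^sub>F k in sequentially. dist (d k) u < \<eta>"
    using assms(4) eta(1) by (rule tendstoD)
  have td: "(\<lambda>k. xbar + t k *\<^sub>R d k) \<longlonglongrightarrow> xbar + 0 *\<^sub>R u"
    by (intro tendsto_intros assms)
  have tu: "(\<lambda>k. xbar + t k *\<^sub>R u) \<longlonglongrightarrow> xbar + 0 *\<^sub>R u"
    by (intro tendsto_intros assms)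
  have e3: "\<forall>\<^sub>F k in sequentially. dist (xbar + t k *\<^sub>R d k) xbar < \<delta>"
    using tendstoD[OF td Kd(1)] by simp
  have e4: "\<forall>\<^sub>F k in sequentially. dist (xbar + t k *\<^sub>R u) xbar < \<delta>"
    using tendstoD[OF tu Kd(1)] by simp
  show ?thesis
    using e1 e2 e3 e4
  proof eventually_elim
    case (elim k)
    have tk: "t k > 0" using assms(2) by simp
    have "\<bar>F (xbar + t k *\<^sub>R d k) - F (xbar + t k *\<^sub>R u)\<bar> \<le> K' * dist (xbar + t k *\<^sub>R d k) (xbar + t k *\<^sub>R u)"
    proof -
      have "xbar + t k *\<^sub>R d k \<in> ball xbar \<delta>" "xbar + t k *\<^sub>R u \<in> ball xbar \<delta>"
        using elim(3,4) by (auto simp: dist_commute)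
      then show ?thesis using K'(1) by blast
    qed
    also have "dist (xbar + t k *\<^sub>R d k) (xbar + t k *\<^sub>R u) = t k * dist (d k) u"
      using tk by (simp add: dist_norm flip: scaleR_diff_right)
    also have "K' * (t k * dist (d k) u) \<le> K' * (t k * \<eta>)"
      using elim(2) tk K'(2) by (intro mult_left_mono) auto
    also have "K' * (t k * \<eta>) \<le> (a - a') * t k"
      using eta(2) tk by (metis mult.assoc mult.commute mult_right_mono less_imp_le)
    finally show ?case using elim(1) by (simp add: algebra_simps)
  qed
qed

theorem corollary5p3:
  fixes p m :: nat and f g :: "nat \<Rightarrow> 'a::banach \<Rightarrow> real" and xbar :: 'a
  assumes "xbar \<in> feas m g"
    and "\<forall>i\<in>{1..p}. locally_lipschitz_at (f i) xbar"
    and "\<forall>j\<in>active m g xbar. locally_lipschitz_at (g j) xbar"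
    and "\<forall>j\<in>{1..m} - active m g xbar. isCont (g j) xbar"
    and "local_geoffrion_proper p f m g xbar"
    and "linearizing_cone p f m g xbar \<subseteq> tangent_cone (feas m g) xbar"
  shows "\<not> (\<exists>u. (\<forall>i\<in>{1..p}. clarke_dd (f i) xbar u \<le> 0) \<and>
              (\<exists>i\<in>{1..p}. clarke_dd (f i) xbar u < 0) \<and>
              (\<forall>j\<in>active m g xbar. clarke_dd (g j) xbar u \<le> 0))"
proof
  assume "\<exists>u. (\<forall>i\<in>{1..p}. clarke_dd (f i) xbar u \<le> 0) \<and>
              (\<exists>i\<in>{1..p}. clarke_dd (f i) xbar u < 0) \<and>
              (\<forall>j\<in>active m g xbar. clarke_dd (g j) xbar u \<le> 0)"
  then obtain u i0 where u1: "\<forall>i\<in>{1..p}. clarke_dd (f i) xbar u \<le> 0"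
    and i0: "i0 \<in> {1..p}" "clarke_dd (f i0) xbar u < 0"
    and u3: "\<forall>j\<in>active m g xbar. clarke_dd (g j) xbar u \<le> 0" by blast
  have "u \<in> linearizing_cone p f m g xbar"
    using u1 u3 unfolding linearizing_cone_def by blast
  with assms(6) have "u \<in> tangent_cone (feas m g) xbar" by blast
  then obtain t :: "nat \<Rightarrow> real" and d :: "nat \<Rightarrow> 'a" where
    td: "\<forall>k. t k > 0" "t \<longlonglongrightarrow> 0" "d \<longlonglongrightarrow> u" "\<forall>k. xbar + t k *\<^sub>R d k \<in> feas m g"
    unfolding tangent_cone_def by blast
  obtain U M where U: "open U" "xbar \<in> U" and M: "M > 0"
    and G: "\<forall>i\<in>{1..p}. \<forall>x\<in>U \<inter> feas m g. f i x < f i xbar \<longrightarrow>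
            (\<exists>j\<in>{1..p}. f j x > f j xbar \<and> (f i xbar - f i x) / (f j x - f j xbar) \<le> M)"
    using assms(5) unfolding local_geoffrion_proper_def by blast
  obtain c0 where c0: "clarke_dd (f i0) xbar u < ereal c0" "ereal c0 < 0"
    using ereal_dense2[OF i0(2)] by blast
  define c where "c = - c0"
  have cpos: "c > 0" using c0(2) unfolding c_def by simp
  have e1: "\<forall>\<^sub>F k in sequentially. f i0 (xbar + t k *\<^sub>R d k) - f i0 xbar < (-c) * t k"
    using clarke_seq2[OF _ td(1,2,3)] c0(1) assms(2) i0(1) unfolding c_def by simp
  have e2: "\<forall>\<^sub>F k in sequentially. \<forall>j\<in>{1..p}. f j (xbar + t k *\<^sub>R d k) - f j xbar < (c / M) * t k"
  proof (rule eventually_ball_finite)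
    show "finite {1..p}" by simp
    show "\<forall>j\<in>{1..p}. \<forall>\<^sub>F k in sequentially. f j (xbar + t k *\<^sub>R d k) - f j xbar < c / M * t k"
    proof
      fix j assume j: "j \<in> {1..p}"
      have "clarke_dd (f j) xbar u < ereal (c / M)"
        using u1 j cpos M by (meson divide_pos_pos ereal_less(2) order.strict_trans1)
      then show "\<forall>\<^sub>F k in sequentially. f j (xbar + t k *\<^sub>R d k) - f j xbar < c / M * t k"
        using clarke_seq2[OF _ td(1,2,3)] assms(2) j by blast
    qed
  qed
  have tx: "(\<lambda>k. xbar + t k *\<^sub>R d k) \<longlonglongrightarrow> xbar + 0 *\<^sub>R u"
    by (intro tendsto_intros td)
  have e3: "\<forall>\<^sub>F k in sequentially. xbar + t k *\<^sub>R d k \<in> U"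
    using topological_tendstoD[OF tx] U by simp
  from e1 e2 e3 have "\<forall>\<^sub>F k in sequentially. False"
  proof eventually_elim
    case (elim k)
    let ?x = "xbar + t k *\<^sub>R d k"
    have tk: "t k > 0" using td(1) by simp
    have xin: "?x \<in> U \<inter> feas m g" using elim(3) td(4) by blast
    have ct: "c * t k > 0" using tk cpos by simp
    have "f i0 ?x < f i0 xbar" using elim(1) ct by simp
    then obtain j where j: "j \<in> {1..p}" "f j ?x > f j xbar"
      "(f i0 xbar - f i0 ?x) / (f j ?x - f j xbar) \<le> M"
      using G i0(1) xin by blast
    have "f i0 xbar - f i0 ?x \<le> M * (f j ?x - f j xbar)"
      using j(2,3) by (simp add: pos_divide_le_eq mult.commute)
    also have "\<dots> < M * (c / M * t k)"
      using elim(2) j(1) M by (intro mult_strict_left_mono) auto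
    also have "\<dots> = c * t k" using M by simp
    finally show False using elim(1) by simp
  qed
  then show False by simp
qed

end
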